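(* If $\Gamma\vdash t:\tau$ and $t\to t'$, then $\Gamma\vdash t':\tau$.
   Context: Types: $\rho,\tau::=\Diamond\mid\mathbf{B}\mid\tau\multimap\rho\mid\tau\otimes\rho\mid\tau\times\rho\mid\mathbf{L}(\tau)$. Raw terms: $r,s,t::=x^\tau\mid c\mid\lambda x^\tau.\,t\mid\langle t,s\rangle\mid ts\mid\{t\}$, where each variable $x^\tau$ carries a type (infinitely many variables of each type), application associates to the left, terms are identified up to renaming of bound variables ($\lambda$ is the only binder), and the constants $c$ with their types are $\mathsf{tt},\mathsf{ff}:\mathbf{B}$; $\mathsf{nil}_\tau:\mathbf{L}(\tau)$; $\mathsf{cons}_\tau:\Diamond\multimap\tau\multimap\mathbf{L}(\tau)\multimap\mathbf{L}(\tau)$; $\otimes_{\tau,\rho}:\tau\multimap\rho\multimap\tau\otimes\rho$. A context is a finite set of typed variables; $\Gamma_1,\Gamma_2$ denotes $\Gamma_1\cup\Gamma_2$ and presupposes $\Gamma_1\cap\Gamma_2=\emptyset$; $x^\tau$ also denotes $\{x^\tau\}$. The relation $\Gamma\vdash t:\tau$ is inductively defined by: (Var) $\Gamma,x^\tau\vdash x:\tau$; (Const) $\Gamma\vdash c:\tau$ for a constant $c$ of type $\tau$; ($\multimap^+$) from $\Gamma\cup\{x^\tau\}\vdash t:\rho$ infer $\Gamma\vdash\lambda x^\tau.t:\tau\multimap\rho$; ($\multimap^-$) from $\Gamma_1\vdash t:\tau\multimap\rho$ and $\Gamma_2\vdash s:\tau$ infer $\Gamma_1,\Gamma_2\vdash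 ts:\rho$; ($\times^+$) from $\Gamma\vdash t:\tau$ and $\Gamma\vdash s:\rho$ infer $\Gamma\vdash\langle t,s\rangle:\tau\times\rho$; ($\times^-_1$) from $\Gamma\vdash t:\tau\times\rho$ infer $\Gamma\vdash t\,\mathsf{tt}:\tau$; ($\times^-_0$) from $\Gamma\vdash t:\tau\times\rho$ infer $\Gamma\vdash t\,\mathsf{ff}:\rho$; ($\mathbf{B}^-$) from $\Gamma_1\vdash t:\mathbf{B}$, $\Gamma_2\vdash s:\tau$, $\Gamma_2\vdash r:\tau$ infer $\Gamma_1,\Gamma_2\vdash t\langle s,r\rangle:\tau$; ($\otimes^-$) from $\Gamma_1\vdash t:\tau\otimes\rho$ and $\Gamma_2,x^\tau,y^\rho\vdash s:\sigma$ infer $\Gamma_1,\Gamma_2\vdash t(\lambda x^\tau.\lambda y^\rho.s):\sigma$; ($\mathbf{L}^-$) from $\Gamma\vdash t:\mathbf{L}(\tau)$ and $\emptyset\vdash s:\Diamond\multimap\tau\multimap\rho\multimap\rho$ infer $\Gamma\vdash t\{s\}:\rho\multimap\rho$. Lists: a list with $n$ entries ($n\ge0$) is a term $\mathsf{cons}_\tau d_1a_1(\mathsf{cons}_\tau d_2a_2(\cdots(\mathsf{cons}_\tau d_na_n\,\mathsf{nil}_\tau)\cdots))$ where the $d_i$ are arbitrary terms of type $\Diamond$ and the $a_i$ arbitrary terms of type $\tau$ (for $n=0$ this is $\mathsf{nil}_\tau$). Conversions $\mapsto$: $(\lambda x.t)s\mapsto t[s/x]$; $\langle t,s\rangle\mathsf{tt}\mapsto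 t$; $\langle t,s\rangle\mathsf{ff}\mapsto s$; $\mathsf{tt}\langle t,s\rangle\mapsto t$; $\mathsf{ff}\langle t,s\rangle\mapsto s$; $\otimes_{\tau,\rho}ts(\lambda x^\tau.\lambda y^\rho.r)\mapsto r[t,s/x,y]$ (simultaneous substitution); $\mathsf{nil}_\tau\{t\}s\mapsto s$; $\mathsf{cons}_\tau d\,a\,\ell\{t\}s\mapsto t\,d\,a\,(\ell\{t\}s)$ provided $\ell$ is a list. The reduction relation $\to$ is inductively defined by: if $t\mapsto t'$ then $t\to t'$; if $t\to t'$ then $ts\to t's$; if $s\to s'$ then $ts\to ts'$ (so there is no reduction under $\lambda$, inside pairs $\langle\cdot,\cdot\rangle$, or inside braces $\{\cdot\}$). *)

theory Defs
  imports Main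
begin

datatype ty = TDia | TBool | TArr ty ty | TTens ty ty | TProd ty ty | TList ty

datatype const = CTt | CFf | CNil ty | CCons ty | CTens ty ty

fun ctype :: "const \<Rightarrow> ty" where
  "ctype CTt = TBool"
| "ctype CFf = TBool"
| "ctype (CNil \<tau>) = TList \<tau>"
| "ctype (CCons \<tau>) = TArr TDia (TArr \<tau> (TArr (TList \<tau>) (TList \<tau>)))"
| "ctype (CTens \<tau> \<rho>) = TArr \<tau> (TArr \<rho> (TTens \<tau> \<rho>))"

text \<open>Terms in locally nameless representation (alpha-equivalence classes of raw terms
  correspond to locally closed terms).\<close>
datatype trm = FVar nat ty | BVar nat | Const const | Lam ty trm | Pair trm trm
  | App trm trm | Brace trm

type_synonym var = "nat \<times> ty"
type_synonym ctx = "var set"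

fun fv :: "trm \<Rightarrow> var set" where
  "fv (FVar x \<tau>) = {(x, \<tau>)}"
| "fv (BVar i) = {}"
| "fv (Const c) = {}"
| "fv (Lam \<tau> t) = fv t"
| "fv (Pair t s) = fv t \<union> fv s"
| "fv (App t s) = fv t \<union> fv s"
| "fv (Brace t) = fv t"

fun opn :: "nat \<Rightarrow> trm \<Rightarrow> trm \<Rightarrow> trm" where
  "opn k u (FVar x \<tau>) = FVar x \<tau>"
| "opn k u (BVar i) = (if i = k then u else BVar i)"
| "opn k u (Const c) = Const c"
| "opn k u (Lam \<tau> t) = Lam \<tau> (opn (Suc k) u t)"
| "opn k u (Pair t s) = Pair (opn k u t) (opn k u s)"
| "opn k u (App t s) = App (opn k u t) (opn k u s)"
| "opn k u (Brace t) = Brace (opn k u t)"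

text \<open>Simultaneous opening: index Suc k (outer binder) by a, index k (inner binder) by b.\<close>
fun opn2 :: "nat \<Rightarrow> trm \<Rightarrow> trm \<Rightarrow> trm \<Rightarrow> trm" where
  "opn2 k a b (FVar x \<tau>) = FVar x \<tau>"
| "opn2 k a b (BVar i) = (if i = k then b else if i = Suc k then a else BVar i)"
| "opn2 k a b (Const c) = Const c"
| "opn2 k a b (Lam \<tau> t) = Lam \<tau> (opn2 (Suc k) a b t)"
| "opn2 k a b (Pair t s) = Pair (opn2 k a b t) (opn2 k a b s)"
| "opn2 k a b (App t s) = App (opn2 k a b t) (opn2 k a b s)"
| "opn2 k a b (Brace t) = Brace (opn2 k a b t)"

text \<open>Contexts are finite sets of typed variables;
  Gamma1,Gamma2 presupposes disjointness.  A lambda whose body is t is typed by choosing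
  a name for the bound variable not free in the abstraction (alpha-renaming).\<close>
inductive typing :: "ctx \<Rightarrow> trm \<Rightarrow> ty \<Rightarrow> bool" where
  T_Var: "finite \<Gamma> \<Longrightarrow> (x, \<tau>) \<notin> \<Gamma> \<Longrightarrow> typing (insert (x, \<tau>) \<Gamma>) (FVar x \<tau>) \<tau>"
| T_Const: "finite \<Gamma> \<Longrightarrow> typing \<Gamma> (Const c) (ctype c)"
| T_LamI: "(x, \<tau>) \<notin> fv t \<Longrightarrow> typing (\<Gamma> \<union> {(x, \<tau>)}) (opn 0 (FVar x \<tau>) t) \<rho>
     \<Longrightarrow> typing \<Gamma> (Lam \<tau> t) (TArr \<tau> \<rho>)"
| T_LamE: "typing \<Gamma>1 t (TArr \<tau> \<rho>) \<Longrightarrow> typing \<Gamma>2 s \<tau> \<Longrightarrow> \<Gamma>1 \<inter> \<Gamma>2 = {}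
     \<Longrightarrow> typing (\<Gamma>1 \<union> \<Gamma>2) (App t s) \<rho>"
| T_ProdI: "typing \<Gamma> t \<tau> \<Longrightarrow> typing \<Gamma> s \<rho> \<Longrightarrow> typing \<Gamma> (Pair t s) (TProd \<tau> \<rho>)"
| T_ProdE1: "typing \<Gamma> t (TProd \<tau> \<rho>) \<Longrightarrow> typing \<Gamma> (App t (Const CTt)) \<tau>"
| T_ProdE0: "typing \<Gamma> t (TProd \<tau> \<rho>) \<Longrightarrow> typing \<Gamma> (App t (Const CFf)) \<rho>"
| T_BoolE: "typing \<Gamma>1 t TBool \<Longrightarrow> typing \<Gamma>2 s \<tau> \<Longrightarrow> typing \<Gamma>2 r \<tau> \<Longrightarrow> \<Gamma>1 \<inter> \<Gamma>2 = {}
     \<Longrightarrow> typing (\<Gamma>1 \<union> \<Gamma>2) (App t (Pair s r)) \<tau>"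
| T_TensE: "typing \<Gamma>1 t (TTens \<tau> \<rho>) \<Longrightarrow>
     (x, \<tau>) \<notin> fv s \<Longrightarrow> (y, \<rho>) \<notin> fv s \<Longrightarrow> (x, \<tau>) \<noteq> (y, \<rho>) \<Longrightarrow>
     (x, \<tau>) \<notin> \<Gamma>2 \<Longrightarrow> (y, \<rho>) \<notin> \<Gamma>2 \<Longrightarrow>
     typing (\<Gamma>2 \<union> {(x, \<tau>), (y, \<rho>)}) (opn2 0 (FVar x \<tau>) (FVar y \<rho>) s) \<sigma> \<Longrightarrow>
     \<Gamma>1 \<inter> \<Gamma>2 = {} \<Longrightarrow>
     typing (\<Gamma>1 \<union> \<Gamma>2) (App t (Lam \<tau> (Lam \<rho> s))) \<sigma>"
| T_ListE: "typing \<Gamma> t (TList \<tau>) \<Longrightarrow> typing {} s (TArr TDia (TArr \<tau> (TArr \<rho> \<rho>)))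
     \<Longrightarrow> typing \<Gamma> (App t (Brace s)) (TArr \<rho> \<rho>)"

inductive is_list :: "ty \<Rightarrow> trm \<Rightarrow> bool" where
  "is_list \<tau> (Const (CNil \<tau>))"
| "is_list \<tau> l \<Longrightarrow> is_list \<tau> (App (App (App (Const (CCons \<tau>)) d) a) l)"

inductive conv :: "trm \<Rightarrow> trm \<Rightarrow> bool" where
  C_beta: "conv (App (Lam \<tau> t) s) (opn 0 s t)"
| C_pair1: "conv (App (Pair t s) (Const CTt)) t"
| C_pair0: "conv (App (Pair t s) (Const CFf)) s"
| C_if1: "conv (App (Const CTt) (Pair t s)) t"
| C_if0: "conv (App (Const CFf) (Pair t s)) s"
| C_tens: "conv (App (App (App (Const (CTens \<tau> \<rho>)) t) s) (Lam \<tau> (Lam \<rho> r))) (opn2 0 t s r)"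
| C_nil: "conv (App (App (Const (CNil \<tau>)) (Brace t)) s) s"
| C_cons: "is_list \<tau> l \<Longrightarrow>
    conv (App (App (App (App (App (Const (CCons \<tau>)) d) a) l) (Brace t)) s)
         (App (App (App t d) a) (App (App l (Brace t)) s))"

inductive red :: "trm \<Rightarrow> trm \<Rightarrow> bool" where
  R_conv: "conv t t' \<Longrightarrow> red t t'"
| R_appL: "red t t' \<Longrightarrow> red (App t s) (App t' s)"
| R_appR: "red s s' \<Longrightarrow> red (App t s) (App t s')"

end

theory Submission
  imports Defs
begin

fun lcl :: "nat \<Rightarrow> trm \<Rightarrow> bool" where
  "lcl n (FVar x \<tau>) = True"
| "lcl n (BVar i) = (i < n)"
| "lcl n (Const c) = True"
| "lcl n (Lam \<tau> t) = lcl (Suc n) t"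
| "lcl n (Pair t s) = (lcl n t \<and> lcl n s)"
| "lcl n (App t s) = (lcl n t \<and> lcl n s)"
| "lcl n (Brace t) = lcl n t"

fun sz :: "trm \<Rightarrow> nat" where
  "sz (FVar x \<tau>) = 1"
| "sz (BVar i) = 1"
| "sz (Const c) = 1"
| "sz (Lam \<tau> t) = Suc (sz t)"
| "sz (Pair t s) = Suc (sz t + sz s)"
| "sz (App t s) = Suc (sz t + sz s)"
| "sz (Brace t) = Suc (sz t)"

fun subst :: "var \<Rightarrow> trm \<Rightarrow> trm \<Rightarrow> trm" where
  "subst X s (FVar x \<tau>) = (if (x, \<tau>) = X then s else FVar x \<tau>)"
| "subst X s (BVar i) = BVar i"
| "subst X s (Const c) = Const c"
| "subst X s (Lam \<tau> t) = Lam \<tau> (subst X s t)"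
| "subst X s (Pair t u) = Pair (subst X s t) (subst X s u)"
| "subst X s (App t u) = App (subst X s t) (subst X s u)"
| "subst X s (Brace t) = Brace (subst X s t)"

definition swn :: "nat \<Rightarrow> nat \<Rightarrow> nat \<Rightarrow> nat" where
  "swn x z y = (if y = x then z else if y = z then x else y)"

fun sv :: "nat \<Rightarrow> nat \<Rightarrow> ty \<Rightarrow> var \<Rightarrow> var" where
  "sv x z \<tau> (y, \<sigma>) = (if \<sigma> = \<tau> then (swn x z y, \<sigma>) else (y, \<sigma>))"

fun pt :: "nat \<Rightarrow> nat \<Rightarrow> ty \<Rightarrow> trm \<Rightarrow> trm" where
  "pt x z \<tau> (FVar y \<sigma>) = FVar (fst (sv x z \<tau> (y, \<sigma>))) \<sigma>"
| "pt x z \<tau> (BVar i) = BVar i"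
| "pt x z \<tau> (Const c) = Const c"
| "pt x z \<tau> (Lam \<sigma> t) = Lam \<sigma> (pt x z \<tau> t)"
| "pt x z \<tau> (Pair t u) = Pair (pt x z \<tau> t) (pt x z \<tau> u)"
| "pt x z \<tau> (App t u) = App (pt x z \<tau> t) (pt x z \<tau> u)"
| "pt x z \<tau> (Brace t) = Brace (pt x z \<tau> t)"

lemma sv_snd[simp]: "snd (sv x z \<tau> v) = snd v"
  by (cases v) auto

lemma sv_inv[simp]: "sv x z \<tau> (sv x z \<tau> v) = v"
  by (cases v) (auto simp: swn_def)

lemma sv_inj: "inj (sv x z \<tau>)"
  by (metis injI sv_inv)

lemma sv_eq_iff[simp]: "(sv x z \<tau> a = sv x z \<tau> b) = (a = b)"
  by (metis sv_inv)

lemma pt_FVar_sv: "pt x z \<tau> (FVar y \<sigma>) = FVar (fst (sv x z \<tau> (y, \<sigma>))) (snd (sv x z \<tau> (y, \<sigma>)))"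
  by simp

lemma fv_finite[simp]: "finite (fv t)"
  by (induction t) auto

lemma fv_pt: "fv (pt x z \<tau> t) = sv x z \<tau> ` fv t"
  by (induction t) (auto simp: swn_def)

lemma pt_opn: "pt x z \<tau> (opn k u t) = opn k (pt x z \<tau> u) (pt x z \<tau> t)"
  by (induction t arbitrary: k) auto

lemma pt_opn2: "pt x z \<tau> (opn2 k a b t) = opn2 k (pt x z \<tau> a) (pt x z \<tau> b) (pt x z \<tau> t)"
  by (induction t arbitrary: k) auto

lemma pt_id: "(x, \<tau>) \<notin> fv t \<Longrightarrow> (z, \<tau>) \<notin> fv t \<Longrightarrow> pt x z \<tau> t = t"
  by (induction t) (auto simp: swn_def)

lemma sv_id: "(x, \<tau>) \<noteq> v \<Longrightarrow> (z, \<tau>) \<noteq> v \<Longrightarrow> sv x z \<tau> v = v"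
  by (cases v) (auto simp: swn_def)

lemma swn_x[simp]: "swn x z x = z"
  by (simp add: swn_def)

lemma sv_x[simp]: "sv x z \<tau> (x, \<tau>) = (z, \<tau>)"
  by (auto simp: swn_def)

lemma sv_img_id: "(x, \<tau>) \<notin> A \<Longrightarrow> (z, \<tau>) \<notin> A \<Longrightarrow> sv x z \<tau> ` A = A"
proof -
  assume a: "(x, \<tau>) \<notin> A" "(z, \<tau>) \<notin> A"
  have "\<And>v. v \<in> A \<Longrightarrow> sv x z \<tau> v = v" using a sv_id by metis
  then show ?thesis by (simp add: image_cong)
qed

lemma sv_img_sub: "(z, \<tau>) \<notin> A \<Longrightarrow> sv x z \<tau> ` A \<subseteq> A \<union> {(z, \<tau>)}"
  by (force simp: swn_def split: if_splits)

lemma typing_finite: "typing \<Gamma> t \<tau> \<Longrightarrow> finite \<Gamma>"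
  by (induction rule: typing.induct) auto

lemma typing_pt: "typing \<Gamma> t \<rho> \<Longrightarrow> typing (sv x z \<tau> ` \<Gamma>) (pt x z \<tau> t) \<rho>"
proof (induction rule: typing.induct)
  case (T_Var \<Gamma> y \<sigma>)
  obtain y' where e: "sv x z \<tau> (y, \<sigma>) = (y', \<sigma>)" by (metis prod.exhaust_sel sv_snd snd_conv)
  have "(y', \<sigma>) \<notin> sv x z \<tau> ` \<Gamma>" using T_Var(2) e by (metis imageE sv_eq_iff)
  then have "typing (insert (y', \<sigma>) (sv x z \<tau> ` \<Gamma>)) (FVar y' \<sigma>) \<sigma>"
    using T_Var(1) by (intro typing.T_Var) auto
  then show ?case using e by simp
next
  case (T_Const \<Gamma> c)
  then show ?case by (auto intro: typing.T_Const)
next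
  case (T_LamI y \<sigma> t \<Gamma> \<rho>)
  obtain y' where e: "sv x z \<tau> (y, \<sigma>) = (y', \<sigma>)" by (metis prod.exhaust_sel sv_snd snd_conv)
  have "(y', \<sigma>) \<notin> fv (pt x z \<tau> t)" using T_LamI(1) e by (metis fv_pt imageE sv_eq_iff)
  moreover have "typing (sv x z \<tau> ` \<Gamma> \<union> {(y', \<sigma>)}) (opn 0 (FVar y' \<sigma>) (pt x z \<tau> t)) \<rho>"
    using T_LamI(3) e by (simp add: pt_opn)
  ultimately show ?case by (simp add: typing.T_LamI)
next
  case (T_LamE \<Gamma>1 t \<sigma> \<rho> \<Gamma>2 s)
  then show ?case by (simp add: image_Un typing.T_LamE image_Int[OF sv_inj, symmetric])
next
  case (T_ProdI \<Gamma> t \<sigma> s \<rho>)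
  then show ?case by (simp add: typing.T_ProdI)
next
  case (T_ProdE1 \<Gamma> t \<sigma> \<rho>)
  then show ?case using typing.T_ProdE1 by fastforce
next
  case (T_ProdE0 \<Gamma> t \<sigma> \<rho>)
  then show ?case using typing.T_ProdE0 by fastforce
next
  case (T_BoolE \<Gamma>1 t \<Gamma>2 s \<sigma> r)
  then show ?case by (simp add: image_Un typing.T_BoolE image_Int[OF sv_inj, symmetric])
next
  case (T_TensE \<Gamma>1 t \<sigma> \<rho> y1 s y2 \<Gamma>2 \<sigma>')
  obtain y1' where e1: "sv x z \<tau> (y1, \<sigma>) = (y1', \<sigma>)" by (metis prod.exhaust_sel sv_snd snd_conv)
  obtain y2' where e2: "sv x z \<tau> (y2, \<rho>) = (y2', \<rho>)" by (metis prod.exhaust_sel sv_snd snd_conv)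
  have a1: "(y1', \<sigma>) \<notin> fv (pt x z \<tau> s)" using T_TensE(2) e1 by (metis fv_pt imageE sv_eq_iff)
  have a2: "(y2', \<rho>) \<notin> fv (pt x z \<tau> s)" using T_TensE(3) e2 by (metis fv_pt imageE sv_eq_iff)
  have a3: "(y1', \<sigma>) \<noteq> (y2', \<rho>)" using T_TensE(4) e1 e2 by (metis sv_eq_iff)
  have a4: "(y1', \<sigma>) \<notin> sv x z \<tau> ` \<Gamma>2" using T_TensE(5) e1 by (metis imageE sv_eq_iff)
  have a5: "(y2', \<rho>) \<notin> sv x z \<tau> ` \<Gamma>2" using T_TensE(6) e2 by (metis imageE sv_eq_iff)
  have a6: "typing (sv x z \<tau> ` \<Gamma>2 \<union> {(y1', \<sigma>), (y2', \<rho>)}) (opn2 0 (FVar y1' \<sigma>) (FVar y2' \<rho>) (pt x z \<tau> s)) \<sigma>'"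
    using T_TensE(10) e1 e2 by (simp add: pt_opn2)
  have a7: "sv x z \<tau> ` \<Gamma>1 \<inter> sv x z \<tau> ` \<Gamma>2 = {}"
    using T_TensE(8) by (simp add: image_Int[OF sv_inj, symmetric])
  show ?case using typing.T_TensE[OF T_TensE(9) a1 a2 a3 a4 a5 a6 a7] by (simp add: image_Un)
next
  case (T_ListE \<Gamma> t \<sigma> s \<rho>)
  then show ?case using typing.T_ListE by fastforce
qed


lemma sz_opn2[simp]: "sz (opn2 k (FVar a \<alpha>) (FVar b \<beta>) t) = sz t"
  by (induction t arbitrary: k) auto
lemma sz_opn[simp]: "sz (opn k (FVar a \<alpha>) t) = sz t"
  by (induction t arbitrary: k) auto

lemma fv_opn_sub: "fv (opn k u t) \<subseteq> fv t \<union> fv u"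
  by (induction t arbitrary: k) auto
lemma fv_opn_sup: "fv t \<subseteq> fv (opn k u t)"
  by (induction t arbitrary: k) auto
lemma fv_opn2_sup: "fv t \<subseteq> fv (opn2 k a b t)"
  by (induction t arbitrary: k) auto

lemma typing_fv: "typing \<Gamma> t \<tau> \<Longrightarrow> fv t \<subseteq> \<Gamma>"
proof (induction rule: typing.induct)
  case (T_LamI x \<tau> t \<Gamma> \<rho>)
  then show ?case using fv_opn_sup[of t 0 "FVar x \<tau>"] by auto
next
  case (T_TensE \<Gamma>1 t \<tau> \<rho> x s y \<Gamma>2 \<sigma>)
  then show ?case using fv_opn2_sup[of s 0 "FVar x \<tau>" "FVar y \<rho>"] by auto
qed auto

lemma lcl_opn: "lcl k (opn k u t) \<Longrightarrow> lcl (Suc k) t"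
  by (induction t arbitrary: k) (auto split: if_splits)
lemma lcl_opn2: "lcl k (opn2 k a b t) \<Longrightarrow> lcl (Suc (Suc k)) t"
  by (induction t arbitrary: k) (auto split: if_splits)

lemma typing_lcl: "typing \<Gamma> t \<tau> \<Longrightarrow> lcl 0 t"
  by (induction rule: typing.induct) (auto intro: lcl_opn lcl_opn2)

lemma lcl_mono: "lcl n t \<Longrightarrow> n \<le> m \<Longrightarrow> lcl m t"
  by (induction t arbitrary: n m) auto

lemma opn_lcl: "lcl n t \<Longrightarrow> n \<le> k \<Longrightarrow> opn k u t = t"
  by (induction t arbitrary: n k) auto

lemma opn_lcl0: "lcl 0 t \<Longrightarrow> opn k u t = t"
  using opn_lcl by blast

lemma subst_opn: "lcl 0 s \<Longrightarrow> subst X s (opn k u t) = opn k (subst X s u) (subst X s t)"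
  by (induction t arbitrary: k) (auto simp: opn_lcl0)

lemma opn2_lcl: "lcl n t \<Longrightarrow> n \<le> k \<Longrightarrow> opn2 k a b t = t"
  by (induction t arbitrary: n k) auto

lemma subst_opn2: "lcl 0 s \<Longrightarrow> subst X s (opn2 k a b t) = opn2 k (subst X s a) (subst X s b) (subst X s t)"
proof (induction t arbitrary: k)
  case (FVar x1 x2)
  have "opn2 k a' b' s = s" for k a' b'
    using FVar opn2_lcl by blast
  with FVar show ?case by auto
qed auto

lemma subst_id: "X \<notin> fv t \<Longrightarrow> subst X s t = t"
  by (induction t) auto

lemma fv_subst: "fv (subst X s t) \<subseteq> (fv t - {X}) \<union> fv s"
  by (induction t) auto

lemma typing_var: "finite \<Gamma> \<Longrightarrow> (y, \<sigma>) \<in> \<Gamma> \<Longrightarrow> typing \<Gamma> (FVar y \<sigma>) \<sigma>"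
  by (metis Diff_iff finite_Diff insert_Diff singletonI typing.T_Var)

lemma weaken: "typing \<Gamma> t \<tau> \<Longrightarrow> finite \<Delta> \<Longrightarrow> typing (\<Gamma> \<union> \<Delta>) t \<tau>"
proof (induction arbitrary: \<Delta> rule: typing.induct)
  case (T_Var \<Gamma> x \<tau>)
  then show ?case by (intro typing_var) auto
next
  case (T_Const \<Gamma> c)
  then show ?case by (simp add: typing.T_Const)
next
  case (T_LamI x \<tau> t \<Gamma> \<rho>)
  then have "typing (\<Gamma> \<union> \<Delta> \<union> {(x, \<tau>)}) (opn 0 (FVar x \<tau>) t) \<rho>"
    by (metis Un_commute Un_left_commute)
  then show ?case using T_LamI by (simp add: typing.T_LamI)
next
  case (T_LamE \<Gamma>1 t \<tau> \<rho> \<Gamma>2 s)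
  have "typing (\<Gamma>1 \<union> (\<Delta> - \<Gamma>2)) t (TArr \<tau> \<rho>)" using T_LamE by simp
  from typing.T_LamE[OF this T_LamE(2)] T_LamE(3)
  have "typing (\<Gamma>1 \<union> (\<Delta> - \<Gamma>2) \<union> \<Gamma>2) (App t s) \<rho>" by blast
  moreover have "\<Gamma>1 \<union> (\<Delta> - \<Gamma>2) \<union> \<Gamma>2 = \<Gamma>1 \<union> \<Gamma>2 \<union> \<Delta>" by blast
  ultimately show ?case by simp
next
  case (T_ProdI \<Gamma> t \<tau> s \<rho>)
  then show ?case by (simp add: typing.T_ProdI)
next
  case (T_ProdE1 \<Gamma> t \<tau> \<rho>)
  then show ?case using typing.T_ProdE1 by blast
next
  case (T_ProdE0 \<Gamma> t \<tau> \<rho>)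
  then show ?case using typing.T_ProdE0 by blast
next
  case (T_BoolE \<Gamma>1 t \<Gamma>2 s \<tau> r)
  have "typing (\<Gamma>1 \<union> (\<Delta> - \<Gamma>2)) t TBool" using T_BoolE by simp
  from typing.T_BoolE[OF this T_BoolE(2,3)] T_BoolE(4)
  have "typing (\<Gamma>1 \<union> (\<Delta> - \<Gamma>2) \<union> \<Gamma>2) (App t (Pair s r)) \<tau>" by blast
  moreover have "\<Gamma>1 \<union> (\<Delta> - \<Gamma>2) \<union> \<Gamma>2 = \<Gamma>1 \<union> \<Gamma>2 \<union> \<Delta>" by blast
  ultimately show ?case by simp
next
  case (T_TensE \<Gamma>1 t \<tau> \<rho> x s y \<Gamma>2 \<sigma>)
  have "typing (\<Gamma>1 \<union> (\<Delta> - \<Gamma>2)) t (TTens \<tau> \<rho>)" using T_TensE by simp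
  from typing.T_TensE[OF this T_TensE(2-7)] T_TensE(8)
  have "typing (\<Gamma>1 \<union> (\<Delta> - \<Gamma>2) \<union> \<Gamma>2) (App t (Lam \<tau> (Lam \<rho> s))) \<sigma>" by blast
  moreover have "\<Gamma>1 \<union> (\<Delta> - \<Gamma>2) \<union> \<Gamma>2 = \<Gamma>1 \<union> \<Gamma>2 \<union> \<Delta>" by blast
  ultimately show ?case by simp
next
  case (T_ListE \<Gamma> t \<tau> s \<rho>)
  have "typing {} s (TArr TDia (TArr \<tau> (TArr \<rho> \<rho>)))" using T_ListE(4)[of "{}"] by simp
  then show ?case using T_ListE(3)[OF T_ListE(5)] typing.T_ListE by blast
qed

lemma lam_inv:
  assumes "typing \<Gamma> (Lam \<tau> t) T"
  shows "\<exists>L \<rho>. finite L \<and> T = TArr \<tau> \<rho> \<and>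
     (\<forall>z. (z, \<tau>) \<notin> L \<longrightarrow> typing (\<Gamma> \<union> {(z, \<tau>)}) (opn 0 (FVar z \<tau>) t) \<rho>)"
  using assms
proof cases
  case (T_LamI x \<rho>)
  have fin: "finite \<Gamma>" using assms typing_finite by blast
  show ?thesis
  proof (intro exI conjI allI impI)
    show "finite (\<Gamma> \<union> fv t \<union> {(x, \<tau>)})" using fin by simp
    show "T = TArr \<tau> \<rho>" by fact
    fix z assume z: "(z, \<tau>) \<notin> \<Gamma> \<union> fv t \<union> {(x, \<tau>)}"
    from typing_pt[OF T_LamI(3), of x z \<tau>]
    have "typing (sv x z \<tau> ` \<Gamma> \<union> {(z, \<tau>)}) (opn 0 (FVar z \<tau>) t) \<rho>"
      using z T_LamI(2) by (simp add: pt_opn pt_id image_Un)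
    from weaken[OF this fin]
    have "typing (sv x z \<tau> ` \<Gamma> \<union> {(z, \<tau>)} \<union> \<Gamma>) (opn 0 (FVar z \<tau>) t) \<rho>" .
    moreover have "sv x z \<tau> ` \<Gamma> \<union> {(z, \<tau>)} \<union> \<Gamma> = \<Gamma> \<union> {(z, \<tau>)}"
      using sv_img_sub[of z \<tau> \<Gamma> x] z by blast
    ultimately show "typing (\<Gamma> \<union> {(z, \<tau>)}) (opn 0 (FVar z \<tau>) t) \<rho>" by simp
  qed
qed


lemma fresh: "finite (A :: var set) \<Longrightarrow> \<exists>z. (z, \<tau>) \<notin> A"
proof -
  assume "finite A"
  then have "finite (fst ` A)" by simp
  then obtain z where "z \<notin> fst ` A" using ex_new_if_finite[OF infinite_UNIV_nat] by blast
  then have "(z, \<tau>) \<notin> A" by force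
  then show ?thesis ..
qed

lemma tens_body:
  assumes h: "typing (\<Gamma>2 \<union> {(x,\<tau>),(y,\<rho>)}) (opn2 0 (FVar x \<tau>) (FVar y \<rho>) s) \<sigma>"
    "(x,\<tau>) \<notin> fv s" "(y,\<rho>) \<notin> fv s" "(x,\<tau>) \<noteq> (y,\<rho>)" "(x,\<tau>) \<notin> \<Gamma>2" "(y,\<rho>) \<notin> \<Gamma>2"
    and f: "(x',\<tau>) \<notin> \<Gamma>2 \<union> fv s \<union> {(x,\<tau>),(y,\<rho>)}" "(y',\<rho>) \<notin> \<Gamma>2 \<union> fv s \<union> {(x,\<tau>),(y,\<rho>)}"
      "(x',\<tau>) \<noteq> (y',\<rho>)"
  shows "typing (\<Gamma>2 \<union> {(x',\<tau>),(y',\<rho>)}) (opn2 0 (FVar x' \<tau>) (FVar y' \<rho>) s) \<sigma>"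
proof -
  have e1: "sv x x' \<tau> (y, \<rho>) = (y, \<rho>)" using h f by (intro sv_id) auto
  have g1: "sv x x' \<tau> ` \<Gamma>2 = \<Gamma>2" using h f by (intro sv_img_id) auto
  from typing_pt[OF h(1), of x x' \<tau>]
  have s1: "typing (\<Gamma>2 \<union> {(x',\<tau>),(y,\<rho>)}) (opn2 0 (FVar x' \<tau>) (FVar y \<rho>) s) \<sigma>"
    using e1 g1 h f by (simp add: pt_opn2 pt_id image_Un)
  have e2: "sv y y' \<rho> (x', \<tau>) = (x', \<tau>)" using h f by (intro sv_id) auto
  have g2: "sv y y' \<rho> ` \<Gamma>2 = \<Gamma>2" using h f by (intro sv_img_id) auto
  from typing_pt[OF s1, of y y' \<rho>]
  show ?thesis
    using e2 g2 h f by (simp add: pt_opn2 pt_id image_Un)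
qed


lemma ctx_splitL:
  assumes "insert X G = G1 \<union> G2" "G1 \<inter> G2 = {}" "X \<notin> G" "G \<inter> D = {}" "X \<in> G1"
  shows "X \<notin> G2" "((G1 - {X}) \<union> D) \<inter> G2 = {}" "(G1 - {X}) \<union> D \<union> G2 = G \<union> D"
    "(G1 - {X}) \<inter> D = {}" "insert X (G1 - {X}) = G1" "X \<notin> G1 - {X}" "G2 \<subseteq> G"
proof -
  have S: "G1 \<subseteq> insert X G" "G2 \<subseteq> insert X G" "G \<subseteq> G1 \<union> G2"
    by (metis assms(1) Un_upper1, metis assms(1) Un_upper2, metis assms(1) subset_insertI)
  show X2: "X \<notin> G2" using assms(2,5) by blast
  have G2: "G2 \<subseteq> G" using S(2) X2 by blast
  have G1: "G1 - {X} \<subseteq> G" using S(1) by blast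
  show "G2 \<subseteq> G" by (fact G2)
  show "((G1 - {X}) \<union> D) \<inter> G2 = {}" using G2 assms(2,4) by blast
  show "(G1 - {X}) \<union> D \<union> G2 = G \<union> D" using G1 G2 S(3) assms(3) by blast
  show "(G1 - {X}) \<inter> D = {}" using G1 assms(4) by blast
  show "insert X (G1 - {X}) = G1" using assms(5) by blast
  show "X \<notin> G1 - {X}" by blast
qed

lemma ctx_splitR:
  assumes "insert X G = G1 \<union> G2" "G1 \<inter> G2 = {}" "X \<notin> G" "G \<inter> D = {}" "X \<notin> G1"
  shows "X \<in> G2" "G1 \<inter> ((G2 - {X}) \<union> D) = {}" "G1 \<union> ((G2 - {X}) \<union> D) = G \<union> D"
    "(G2 - {X}) \<inter> D = {}" "insert X (G2 - {X}) = G2" "X \<notin> G2 - {X}" "G1 \<subseteq> G"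
proof -
  have S: "G1 \<subseteq> insert X G" "G2 \<subseteq> insert X G" "G \<subseteq> G1 \<union> G2" "X \<in> G1 \<union> G2"
    by (metis assms(1) Un_upper1, metis assms(1) Un_upper2, metis assms(1) subset_insertI, metis assms(1) insertI1)
  show X2: "X \<in> G2" using assms(5) S(4) by blast
  have G1: "G1 \<subseteq> G" using S(1) assms(5) by blast
  have G2: "G2 - {X} \<subseteq> G" using S(2) by blast
  show "G1 \<subseteq> G" by (fact G1)
  show "G1 \<inter> ((G2 - {X}) \<union> D) = {}" using G1 assms(2,4) by blast
  show "G1 \<union> ((G2 - {X}) \<union> D) = G \<union> D" using G1 G2 S(3) assms(3) by blast
  show "(G2 - {X}) \<inter> D = {}" using G2 assms(4) by blast
  show "insert X (G2 - {X}) = G2" using X2 by blast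
  show "X \<notin> G2 - {X}" by blast
qed

lemma subst_typing:
  "typing (insert X \<Gamma>) u \<rho> \<Longrightarrow> X \<notin> \<Gamma> \<Longrightarrow> \<Gamma> \<inter> \<Delta> = {} \<Longrightarrow> typing \<Delta> s (snd X)
   \<Longrightarrow> typing (\<Gamma> \<union> \<Delta>) (subst X s u) \<rho>"
proof (induction u arbitrary: \<Gamma> \<rho> rule: measure_induct_rule[of sz])
  case (less u)
  note ty = less.prems(1) and XG = less.prems(2) and GD = less.prems(3) and sD = less.prems(4)
  have finG: "finite \<Gamma>" using typing_finite[OF ty] by simp
  have finD: "finite \<Delta>" using sD typing_finite by blast
  have lcs: "lcl 0 s" using sD typing_lcl by blast
  have fvs: "fv s \<subseteq> \<Delta>" using sD typing_fv by blast
  have IH': "typing (\<Gamma>' \<union> \<Delta>) (subst X s v) \<rho>'"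
    if "sz v < sz u" "typing (insert X \<Gamma>') v \<rho>'" "X \<notin> \<Gamma>'" "\<Gamma>' \<inter> \<Delta> = {}" for v \<Gamma>' \<rho>'
    using less.IH[OF that(1,2,3,4) sD] .
  show ?case
  proof (cases u)
    case (FVar y \<sigma>)
    from ty[unfolded FVar] have r: "\<rho> = \<sigma>" "(y, \<sigma>) \<in> insert X \<Gamma>"
      by (cases rule: typing.cases; auto)+
    show ?thesis
    proof (cases "(y, \<sigma>) = X")
      case True
      then show ?thesis using weaken[OF sD finG] r FVar by (auto simp: Un_commute)
    next
      case False
      then show ?thesis using r FVar finG finD by (auto intro: typing_var)
    qed
  next
    case (BVar i)
    from ty[unfolded BVar] show ?thesis by cases
  next
    case (Const c)
    from ty[unfolded Const] show ?thesis by cases (auto simp: Const finG finD intro: typing.T_Const)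
  next
    case (Brace t)
    from ty[unfolded Brace] show ?thesis by cases
  next
    case (Pair t1 t2)
    from ty[unfolded Pair] show ?thesis
    proof cases
      case (T_ProdI \<tau> \<rho>')
      have "typing (\<Gamma> \<union> \<Delta>) (subst X s t1) \<tau>"
        by (rule IH') (use T_ProdI Pair XG GD in auto)
      moreover have "typing (\<Gamma> \<union> \<Delta>) (subst X s t2) \<rho>'"
        by (rule IH') (use T_ProdI Pair XG GD in auto)
      ultimately show ?thesis using T_ProdI Pair by (simp add: typing.T_ProdI)
    qed
  next
    case (Lam \<tau> t)
    from lam_inv[OF ty[unfolded Lam]] obtain L \<rho>' where
      L: "finite L" "\<rho> = TArr \<tau> \<rho>'"
      "\<And>z. (z, \<tau>) \<notin> L \<Longrightarrow> typing (insert X \<Gamma> \<union> {(z, \<tau>)}) (opn 0 (FVar z \<tau>) t) \<rho>'" by blast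
    obtain z where z: "(z, \<tau>) \<notin> L \<union> \<Gamma> \<union> \<Delta> \<union> fv t \<union> {X}"
      using fresh[of "L \<union> \<Gamma> \<union> \<Delta> \<union> fv t \<union> {X}"] L(1) finG finD by auto
    have t1: "typing (insert X (\<Gamma> \<union> {(z, \<tau>)})) (opn 0 (FVar z \<tau>) t) \<rho>'"
      using L(3)[of z] z by (simp add: insert_commute)
    have "typing (\<Gamma> \<union> {(z, \<tau>)} \<union> \<Delta>) (subst X s (opn 0 (FVar z \<tau>) t)) \<rho>'"
      by (rule IH'[OF _ t1]) (use Lam XG GD z in auto)
    then have t2: "typing ((\<Gamma> \<union> \<Delta>) \<union> {(z, \<tau>)}) (opn 0 (FVar z \<tau>) (subst X s t)) \<rho>'"
      using z lcs by (simp add: subst_opn Un_ac)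
    have "(z, \<tau>) \<notin> fv (subst X s t)" using fv_subst[of X s t] z fvs by auto
    from typing.T_LamI[OF this t2] show ?thesis using Lam L by simp
  next
    case (App t1 t2)
    from ty[unfolded App] show ?thesis
    proof cases
      case (T_LamE \<Gamma>1 \<tau> \<Gamma>2)
      note L1 = T_LamE(1) and L2 = T_LamE(2) and L3 = T_LamE(3) and L4 = T_LamE(4)
      show ?thesis
      proof (cases "X \<in> \<Gamma>1")
        case True
        have X2: "X \<notin> \<Gamma>2" using True L4 by blast
        have S1: "\<Gamma>1 \<subseteq> insert X \<Gamma>" "\<Gamma>2 \<subseteq> insert X \<Gamma>" "\<Gamma> \<subseteq> \<Gamma>1 \<union> \<Gamma>2" "X \<in> \<Gamma>1 \<union> \<Gamma>2"
          by (metis L1 Un_upper1, metis L1 Un_upper2, metis L1 subset_insertI, metis L1 insertI1)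
        have G2: "\<Gamma>2 \<subseteq> \<Gamma>" using S1(2) X2 by blast
        have G1: "\<Gamma>1 - {X} \<subseteq> \<Gamma>" using S1(1) by blast
        have "fv t2 \<subseteq> \<Gamma>2" using typing_fv[OF L3] .
        then have e: "subst X s t2 = t2" using X2 subst_id by blast
        have i1: "typing (insert X (\<Gamma>1 - {X})) t1 (TArr \<tau> \<rho>)" using L2 True by (simp add: insert_absorb)
        have "typing ((\<Gamma>1 - {X}) \<union> \<Delta>) (subst X s t1) (TArr \<tau> \<rho>)"
          by (rule IH'[OF _ i1]) (use App G1 GD in auto)
        moreover have "((\<Gamma>1 - {X}) \<union> \<Delta>) \<inter> \<Gamma>2 = {}" using G2 L4 GD by blast
        ultimately have
          "typing ((\<Gamma>1 - {X}) \<union> \<Delta> \<union> \<Gamma>2) (App (subst X s t1) t2) \<rho>"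
          using L3 typing.T_LamE by blast
        moreover have "(\<Gamma>1 - {X}) \<union> \<Delta> \<union> \<Gamma>2 = \<Gamma> \<union> \<Delta>" using G1 G2 S1(3) XG by blast
        ultimately show ?thesis using App e by simp
      next
        case False
        have S1: "\<Gamma>1 \<subseteq> insert X \<Gamma>" "\<Gamma>2 \<subseteq> insert X \<Gamma>" "\<Gamma> \<subseteq> \<Gamma>1 \<union> \<Gamma>2" "X \<in> \<Gamma>1 \<union> \<Gamma>2"
          by (metis L1 Un_upper1, metis L1 Un_upper2, metis L1 subset_insertI, metis L1 insertI1)
        have X2: "X \<in> \<Gamma>2" using False S1(4) by blast
        have G1: "\<Gamma>1 \<subseteq> \<Gamma>" using S1(1) False by blast
        have G2: "\<Gamma>2 - {X} \<subseteq> \<Gamma>" using S1(2) by blast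
        have "fv t1 \<subseteq> \<Gamma>1" using typing_fv[OF L2] .
        then have e: "subst X s t1 = t1" using False subst_id by blast
        have i2: "typing (insert X (\<Gamma>2 - {X})) t2 \<tau>" using L3 X2 by (simp add: insert_absorb)
        have "typing ((\<Gamma>2 - {X}) \<union> \<Delta>) (subst X s t2) \<tau>"
          by (rule IH'[OF _ i2]) (use App G2 GD in auto)
        moreover have "\<Gamma>1 \<inter> ((\<Gamma>2 - {X}) \<union> \<Delta>) = {}" using G1 L4 GD by blast
        ultimately have
          "typing (\<Gamma>1 \<union> ((\<Gamma>2 - {X}) \<union> \<Delta>)) (App t1 (subst X s t2)) \<rho>"
          using L2 typing.T_LamE by blast
        moreover have "\<Gamma>1 \<union> ((\<Gamma>2 - {X}) \<union> \<Delta>) = \<Gamma> \<union> \<Delta>" using G1 G2 S1(3) XG by blast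
        ultimately show ?thesis using App e by simp
      qed
    next
      case (T_ProdE1 \<rho>')
      have "typing (\<Gamma> \<union> \<Delta>) (subst X s t1) (TProd \<rho> \<rho>')"
        by (rule IH') (use T_ProdE1 App XG GD in auto)
      then show ?thesis using T_ProdE1 App by (simp add: typing.T_ProdE1)
    next
      case (T_ProdE0 \<tau>')
      have "typing (\<Gamma> \<union> \<Delta>) (subst X s t1) (TProd \<tau>' \<rho>)"
        by (rule IH') (use T_ProdE0 App XG GD in auto)
      then show ?thesis using T_ProdE0 App by (simp add: typing.T_ProdE0)
    next
      case (T_BoolE \<Gamma>1 \<Gamma>2 s1 r1)
      note B1 = T_BoolE(1) and B2 = T_BoolE(2) and B3 = T_BoolE(3) and B4 = T_BoolE(4)
        and B5 = T_BoolE(5) and B6 = T_BoolE(6)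
      show ?thesis
      proof (cases "X \<in> \<Gamma>1")
        case True
        note c = ctx_splitL[OF B1 B6 XG GD True]
        have "fv s1 \<subseteq> \<Gamma>2" "fv r1 \<subseteq> \<Gamma>2" using typing_fv[OF B4] typing_fv[OF B5] by auto
        then have "X \<notin> fv s1" "X \<notin> fv r1" using c(1) by blast+
        then have e: "subst X s t2 = t2" using B2 by (simp add: subst_id)
        have i1: "typing (insert X (\<Gamma>1 - {X})) t1 TBool" using B3 c(5) by simp
        have "typing ((\<Gamma>1 - {X}) \<union> \<Delta>) (subst X s t1) TBool"
          by (rule IH'[OF _ i1 c(6) c(4)]) (simp add: App)
        from typing.T_BoolE[OF this B4 B5 c(2)]
        have "typing ((\<Gamma>1 - {X}) \<union> \<Delta> \<union> \<Gamma>2) (App (subst X s t1) (Pair s1 r1)) \<rho>" .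
        then show ?thesis using App e B2 c(3) by simp
      next
        case False
        note c = ctx_splitR[OF B1 B6 XG GD False]
        have "fv t1 \<subseteq> \<Gamma>1" using typing_fv[OF B3] .
        then have e: "subst X s t1 = t1" using False subst_id by blast
        have i1: "typing (insert X (\<Gamma>2 - {X})) s1 \<rho>" using B4 c(5) by simp
        have i2: "typing (insert X (\<Gamma>2 - {X})) r1 \<rho>" using B5 c(5) by simp
        have a: "typing ((\<Gamma>2 - {X}) \<union> \<Delta>) (subst X s s1) \<rho>"
          by (rule IH'[OF _ i1 c(6) c(4)]) (simp add: App B2)
        have b: "typing ((\<Gamma>2 - {X}) \<union> \<Delta>) (subst X s r1) \<rho>"
          by (rule IH'[OF _ i2 c(6) c(4)]) (simp add: App B2)
        from typing.T_BoolE[OF B3 a b c(2)]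
        have "typing (\<Gamma>1 \<union> ((\<Gamma>2 - {X}) \<union> \<Delta>)) (App t1 (Pair (subst X s s1) (subst X s r1))) \<rho>" .
        then show ?thesis using App e B2 c(3) by simp
      qed
    next
      case (T_TensE \<Gamma>1 \<tau> \<rho>' x s0 y \<Gamma>2)
      note E1 = T_TensE(1) and E2 = T_TensE(2) and E3 = T_TensE(3) and E4 = T_TensE(4)
        and E5 = T_TensE(5) and E6 = T_TensE(6) and E7 = T_TensE(7) and E8 = T_TensE(8)
        and E9 = T_TensE(9) and E10 = T_TensE(10)
      show ?thesis
      proof (cases "X \<in> \<Gamma>1")
        case True
        note c = ctx_splitL[OF E1 E10 XG GD True]
        have "fv s0 \<subseteq> fv (opn2 0 (FVar x \<tau>) (FVar y \<rho>') s0)" by (rule fv_opn2_sup)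
        also have "\<dots> \<subseteq> \<Gamma>2 \<union> {(x, \<tau>), (y, \<rho>')}" using typing_fv[OF E9] .
        finally have "fv s0 \<subseteq> \<Gamma>2" using E4 E5 by auto
        then have "X \<notin> fv s0" using c(1) by blast
        then have e: "subst X s t2 = t2" using E2 by (simp add: subst_id)
        have i1: "typing (insert X (\<Gamma>1 - {X})) t1 (TTens \<tau> \<rho>')" using E3 c(5) by simp
        have "typing ((\<Gamma>1 - {X}) \<union> \<Delta>) (subst X s t1) (TTens \<tau> \<rho>')"
          by (rule IH'[OF _ i1 c(6) c(4)]) (simp add: App)
        from typing.T_TensE[OF this E4 E5 E6 E7 E8 E9 c(2)]
        have "typing ((\<Gamma>1 - {X}) \<union> \<Delta> \<union> \<Gamma>2) (App (subst X s t1) (Lam \<tau> (Lam \<rho>' s0))) \<rho>" .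
        then show ?thesis using App e E2 c(3) by simp
      next
        case False
        note c = ctx_splitR[OF E1 E10 XG GD False]
        have "fv t1 \<subseteq> \<Gamma>1" using typing_fv[OF E3] .
        then have e: "subst X s t1 = t1" using False subst_id by blast
        define B where "B = \<Gamma>2 \<union> fv s0 \<union> {(x,\<tau>),(y,\<rho>')} \<union> \<Delta> \<union> {X} \<union> \<Gamma>1"
        have finB: "finite B" unfolding B_def using finD typing_finite[OF E9] typing_finite[OF E3] by simp
        obtain x' where x': "(x', \<tau>) \<notin> B" using fresh[OF finB, of \<tau>] by (elim exE)
        have finB': "finite (insert (x', \<tau>) B)" using finB by simp
        obtain y' where y': "(y', \<rho>') \<notin> insert (x', \<tau>) B" using fresh[OF finB', of \<rho>'] by (elim exE)
        have x'B: "(x',\<tau>) \<notin> \<Gamma>2 \<union> fv s0 \<union> {(x,\<tau>),(y,\<rho>')}" using x' unfolding B_def by simp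
        have y'B: "(y',\<rho>') \<notin> \<Gamma>2 \<union> fv s0 \<union> {(x,\<tau>),(y,\<rho>')}" using y' unfolding B_def by simp
        have xy: "(x',\<tau>) \<noteq> (y',\<rho>')" using y' by auto
        have body: "typing (\<Gamma>2 \<union> {(x',\<tau>),(y',\<rho>')}) (opn2 0 (FVar x' \<tau>) (FVar y' \<rho>') s0) \<rho>"
          by (rule tens_body[OF E9 E4 E5 E6 E7 E8 x'B y'B xy])
        define G where "G = (\<Gamma>2 - {X}) \<union> {(x',\<tau>),(y',\<rho>')}"
        have i1: "typing (insert X G) (opn2 0 (FVar x' \<tau>) (FVar y' \<rho>') s0) \<rho>"
        proof -
          have "insert X G = \<Gamma>2 \<union> {(x',\<tau>),(y',\<rho>')}" using c(5) unfolding G_def by auto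
          then show ?thesis using body by simp
        qed
        have XG': "X \<notin> G" using x' y' unfolding B_def G_def by auto
        have GD': "G \<inter> \<Delta> = {}" using c(4) x' y' unfolding B_def G_def by auto
        have "typing (G \<union> \<Delta>) (subst X s (opn2 0 (FVar x' \<tau>) (FVar y' \<rho>') s0)) \<rho>"
          by (rule IH'[OF _ i1 XG' GD']) (simp add: App E2)
        moreover have "subst X s (opn2 0 (FVar x' \<tau>) (FVar y' \<rho>') s0)
             = opn2 0 (FVar x' \<tau>) (FVar y' \<rho>') (subst X s s0)"
          using lcs x' y' unfolding B_def by (simp add: subst_opn2)
        moreover have "G \<union> \<Delta> = ((\<Gamma>2 - {X}) \<union> \<Delta>) \<union> {(x',\<tau>),(y',\<rho>')}" unfolding G_def by auto
        ultimately have bd: "typing (((\<Gamma>2 - {X}) \<union> \<Delta>) \<union> {(x',\<tau>),(y',\<rho>')})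
                (opn2 0 (FVar x' \<tau>) (FVar y' \<rho>') (subst X s s0)) \<rho>" by simp
        have fx: "(x',\<tau>) \<notin> fv (subst X s s0)" "(y',\<rho>') \<notin> fv (subst X s s0)"
          using fv_subst[of X s s0] x' y' fvs unfolding B_def by auto
        have n1: "(x',\<tau>) \<notin> (\<Gamma>2 - {X}) \<union> \<Delta>" "(y',\<rho>') \<notin> (\<Gamma>2 - {X}) \<union> \<Delta>"
          using x' y' unfolding B_def by auto
        from typing.T_TensE[OF E3 fx xy n1 bd c(2)]
        have "typing (\<Gamma>1 \<union> ((\<Gamma>2 - {X}) \<union> \<Delta>)) (App t1 (Lam \<tau> (Lam \<rho>' (subst X s s0)))) \<rho>" .
        then show ?thesis using App e E2 c(3) by simp
      qed
    next
      case (T_ListE \<tau> s0 \<rho>')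
      have "fv s0 \<subseteq> {}" using T_ListE typing_fv by blast
      then have e: "subst X s (Brace s0) = Brace s0" by (simp add: subst_id)
      have "typing (\<Gamma> \<union> \<Delta>) (subst X s t1) (TList \<tau>)"
        by (rule IH') (use T_ListE App XG GD in auto)
      then show ?thesis using T_ListE App e by (simp add: typing.T_ListE)
    qed
  qed
qed

lemma const_inv: "typing \<Gamma> (Const c) T \<Longrightarrow> T = ctype c \<and> finite \<Gamma>"
  by (cases rule: typing.cases) auto

lemma pair_inv: "typing \<Gamma> (Pair t s) T \<Longrightarrow> \<exists>a b. T = TProd a b \<and> typing \<Gamma> t a \<and> typing \<Gamma> s b"
  by (cases rule: typing.cases) auto

lemma app_inv_arr:
  assumes "typing \<Gamma> (App f s) T"
    and "\<And>\<Gamma>' T'. typing \<Gamma>' f T' \<Longrightarrow> \<exists>a b. T' = TArr a b"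
  shows "\<exists>\<Gamma>1 \<Gamma>2 a. \<Gamma> = \<Gamma>1 \<union> \<Gamma>2 \<and> \<Gamma>1 \<inter> \<Gamma>2 = {} \<and> typing \<Gamma>1 f (TArr a T) \<and> typing \<Gamma>2 s a"
  using assms(1)
proof cases
  case (T_LamE \<Gamma>1 \<tau> \<Gamma>2)
  then show ?thesis by blast
next
  case (T_ProdE1 \<rho>)
  then show ?thesis using assms(2)[of \<Gamma> "TProd T \<rho>"] by auto
next
  case (T_ProdE0 \<tau>)
  then show ?thesis using assms(2)[of \<Gamma> "TProd \<tau> T"] by auto
next
  case (T_BoolE \<Gamma>1 \<Gamma>2 s r)
  then show ?thesis using assms(2)[of \<Gamma>1 TBool] by auto
next
  case (T_TensE \<Gamma>1 \<tau> \<rho> x s y \<Gamma>2)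
  then show ?thesis using assms(2)[of \<Gamma>1 "TTens \<tau> \<rho>"] by auto
next
  case (T_ListE \<tau> s \<rho>)
  then show ?thesis using assms(2)[of \<Gamma> "TList \<tau>"] by auto
qed

lemma app_const1:
  assumes "typing \<Gamma> (App (Const c) d) T" "ctype c = TArr a b"
  shows "T = b \<and> (\<exists>\<Gamma>1 \<Gamma>2. \<Gamma> = \<Gamma>1 \<union> \<Gamma>2 \<and> \<Gamma>1 \<inter> \<Gamma>2 = {} \<and> finite \<Gamma>1 \<and> typing \<Gamma>2 d a)"
proof -
  have arr: "\<exists>a b. T' = TArr a b" if "typing \<Gamma>' (Const c) T'" for \<Gamma>' T'
    using const_inv[OF that] assms(2) by simp
  have "\<exists>\<Gamma>1 \<Gamma>2 a'. \<Gamma> = \<Gamma>1 \<union> \<Gamma>2 \<and> \<Gamma>1 \<inter> \<Gamma>2 = {} \<and> typing \<Gamma>1 (Const c) (TArr a' T) \<and> typing \<Gamma>2 d a'"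
    by (rule app_inv_arr[OF assms(1)]) (erule arr)
  then obtain \<Gamma>1 \<Gamma>2 a' where
    h: "\<Gamma> = \<Gamma>1 \<union> \<Gamma>2" "\<Gamma>1 \<inter> \<Gamma>2 = {}" "typing \<Gamma>1 (Const c) (TArr a' T)" "typing \<Gamma>2 d a'"
    by auto
  from const_inv[OF h(3)] assms(2) have e: "a' = a" "T = b" "finite \<Gamma>1" by auto
  show ?thesis
    apply (rule conjI[OF e(2)])
    apply (rule exI[of _ \<Gamma>1], rule exI[of _ \<Gamma>2])
    using h e by simp
qed

lemma app_const2:
  assumes "typing \<Gamma> (App (App (Const c) d) e) T" "ctype c = TArr a (TArr b r)"
  shows "T = r \<and> (\<exists>\<Gamma>c \<Gamma>d \<Gamma>e. \<Gamma> = (\<Gamma>c \<union> \<Gamma>d) \<union> \<Gamma>e \<and> \<Gamma>c \<inter> \<Gamma>d = {} \<and> (\<Gamma>c \<union> \<Gamma>d) \<inter> \<Gamma>e = {}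
     \<and> finite \<Gamma>c \<and> typing \<Gamma>d d a \<and> typing \<Gamma>e e b)"
proof -
  have arr: "\<exists>a b. T' = TArr a b" if "typing \<Gamma>' (App (Const c) d) T'" for \<Gamma>' T'
    using app_const1[OF that assms(2)] by simp
  have "\<exists>\<Gamma>1 \<Gamma>2 a'. \<Gamma> = \<Gamma>1 \<union> \<Gamma>2 \<and> \<Gamma>1 \<inter> \<Gamma>2 = {} \<and> typing \<Gamma>1 (App (Const c) d) (TArr a' T) \<and> typing \<Gamma>2 e a'"
    by (rule app_inv_arr[OF assms(1)]) (erule arr)
  then obtain \<Gamma>1 \<Gamma>2 a' where
    h: "\<Gamma> = \<Gamma>1 \<union> \<Gamma>2" "\<Gamma>1 \<inter> \<Gamma>2 = {}" "typing \<Gamma>1 (App (Const c) d) (TArr a' T)" "typing \<Gamma>2 e a'"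
    by auto
  from app_const1[OF h(3) assms(2)] obtain \<Gamma>c \<Gamma>d where
    g: "TArr a' T = TArr b r" "\<Gamma>1 = \<Gamma>c \<union> \<Gamma>d" "\<Gamma>c \<inter> \<Gamma>d = {}" "finite \<Gamma>c" "typing \<Gamma>d d a" by auto
  show ?thesis
    apply (rule conjI)
    using g(1) apply simp
    apply (rule exI[of _ \<Gamma>c], rule exI[of _ \<Gamma>d], rule exI[of _ \<Gamma>2])
    using h g by simp
qed

lemma app_const3:
  assumes "typing \<Gamma> (App (App (App (Const c) d) e) f) T" "ctype c = TArr a (TArr b (TArr r q))"
  shows "T = q \<and> (\<exists>\<Gamma>c \<Gamma>d \<Gamma>e \<Gamma>f. \<Gamma> = ((\<Gamma>c \<union> \<Gamma>d) \<union> \<Gamma>e) \<union> \<Gamma>f \<and> \<Gamma>c \<inter> \<Gamma>d = {} \<and> (\<Gamma>c \<union> \<Gamma>d) \<inter> \<Gamma>e = {}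
     \<and> ((\<Gamma>c \<union> \<Gamma>d) \<union> \<Gamma>e) \<inter> \<Gamma>f = {}
     \<and> finite \<Gamma>c \<and> typing \<Gamma>d d a \<and> typing \<Gamma>e e b \<and> typing \<Gamma>f f r)"
proof -
  have arr: "\<exists>a b. T' = TArr a b" if "typing \<Gamma>' (App (App (Const c) d) e) T'" for \<Gamma>' T'
    using app_const2[OF that assms(2)] by simp
  have "\<exists>\<Gamma>1 \<Gamma>2 a'. \<Gamma> = \<Gamma>1 \<union> \<Gamma>2 \<and> \<Gamma>1 \<inter> \<Gamma>2 = {} \<and> typing \<Gamma>1 (App (App (Const c) d) e) (TArr a' T) \<and> typing \<Gamma>2 f a'"
    by (rule app_inv_arr[OF assms(1)]) (erule arr)
  then obtain \<Gamma>1 \<Gamma>2 a' where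
    h: "\<Gamma> = \<Gamma>1 \<union> \<Gamma>2" "\<Gamma>1 \<inter> \<Gamma>2 = {}" "typing \<Gamma>1 (App (App (Const c) d) e) (TArr a' T)" "typing \<Gamma>2 f a'"
    by auto
  from app_const2[OF h(3) assms(2)] obtain \<Gamma>c \<Gamma>d \<Gamma>e where
    g: "TArr a' T = TArr r q" "\<Gamma>1 = (\<Gamma>c \<union> \<Gamma>d) \<union> \<Gamma>e" "\<Gamma>c \<inter> \<Gamma>d = {}" "(\<Gamma>c \<union> \<Gamma>d) \<inter> \<Gamma>e = {}"
      "finite \<Gamma>c" "typing \<Gamma>d d a" "typing \<Gamma>e e b" by auto
  show ?thesis
    apply (rule conjI)
    using g(1) apply simp
    apply (rule exI[of _ \<Gamma>c], rule exI[of _ \<Gamma>d], rule exI[of _ \<Gamma>e], rule exI[of _ \<Gamma>2])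
    using h g by simp
qed

lemma nil_inv:
  assumes "typing \<Gamma> (App (Const (CNil \<sigma>)) (Brace t)) T" shows "\<exists>\<rho>. T = TArr \<rho> \<rho>"
  using assms
proof cases
  case (T_LamE \<Gamma>1 \<tau> \<Gamma>2)
  then show ?thesis by (auto dest!: const_inv)
qed auto

lemma brace_inv:
  assumes "typing \<Gamma> (App H (Brace t)) T" and "\<And>\<Gamma>' T'. typing \<Gamma>' H T' \<Longrightarrow> T' = TList \<sigma>"
  shows "\<exists>\<rho>. T = TArr \<rho> \<rho> \<and> typing \<Gamma> H (TList \<sigma>) \<and> typing {} t (TArr TDia (TArr \<sigma> (TArr \<rho> \<rho>)))"
  using assms(1)
proof cases
  case (T_LamE \<Gamma>1 \<tau> \<Gamma>2)
  then show ?thesis using assms(2)[of \<Gamma>1 "TArr \<tau> T"] by simp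
next
  case (T_ListE \<tau> \<rho>)
  then show ?thesis using assms(2)[of \<Gamma> "TList \<tau>"] by auto
qed

lemma red_app: "red t t' \<Longrightarrow> \<exists>a b. t = App a b"
proof (induction rule: red.induct)
  case (R_conv t t')
  then show ?case by (cases rule: conv.cases) simp_all
qed simp_all

lemma conv_pres:
  assumes cv: "conv u u'" and ty: "typing \<Gamma> u T"
  shows "typing \<Gamma> u' T"
  using cv
proof cases
  case (C_beta \<sigma> t s)
  have arr: "\<exists>a b. T' = TArr a b" if "typing \<Gamma>' (Lam \<sigma> t) T'" for \<Gamma>' T'
    using lam_inv[OF that] by blast
  have "\<exists>\<Gamma>1 \<Gamma>2 a. \<Gamma> = \<Gamma>1 \<union> \<Gamma>2 \<and> \<Gamma>1 \<inter> \<Gamma>2 = {} \<and> typing \<Gamma>1 (Lam \<sigma> t) (TArr a T) \<and> typing \<Gamma>2 s a"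
    by (rule app_inv_arr[OF ty[unfolded C_beta(1)]]) (erule arr)
  then obtain \<Gamma>1 \<Gamma>2 a where
    h: "\<Gamma> = \<Gamma>1 \<union> \<Gamma>2" "\<Gamma>1 \<inter> \<Gamma>2 = {}" "typing \<Gamma>1 (Lam \<sigma> t) (TArr a T)" "typing \<Gamma>2 s a"
    by auto
  from lam_inv[OF h(3)] obtain L \<rho> where
    l: "finite L" "TArr a T = TArr \<sigma> \<rho>"
      "\<And>z. (z, \<sigma>) \<notin> L \<Longrightarrow> typing (\<Gamma>1 \<union> {(z, \<sigma>)}) (opn 0 (FVar z \<sigma>) t) \<rho>" by auto
  have fin: "finite (L \<union> \<Gamma>1 \<union> fv t)" using l(1) typing_finite[OF h(3)] by simp
  obtain z where z: "(z, \<sigma>) \<notin> L \<union> \<Gamma>1 \<union> fv t" using fresh[OF fin, of \<sigma>] by (elim exE)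
  have t1: "typing (insert (z, \<sigma>) \<Gamma>1) (opn 0 (FVar z \<sigma>) t) T"
    using l(3)[of z] l(2) z by simp
  have s1: "typing \<Gamma>2 s (snd (z, \<sigma>))" using h(4) l(2) by simp
  have zG: "(z, \<sigma>) \<notin> \<Gamma>1" using z by simp
  from subst_typing[OF t1 zG h(2) s1]
  have "typing (\<Gamma>1 \<union> \<Gamma>2) (subst (z, \<sigma>) s (opn 0 (FVar z \<sigma>) t)) T" .
  moreover have "subst (z, \<sigma>) s (opn 0 (FVar z \<sigma>) t) = opn 0 s t"
    using typing_lcl[OF h(4)] z by (simp add: subst_opn subst_id)
  ultimately show ?thesis using h(1) C_beta(2) by simp
next
  case C_pair1
  from ty[unfolded C_pair1(1)] show ?thesis
  proof cases
    case (T_LamE \<Gamma>1 \<tau> \<Gamma>2)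
    then show ?thesis by (auto dest!: pair_inv)
  next
    case (T_ProdE1 \<rho>)
    then show ?thesis by (auto dest!: pair_inv)
  qed
next
  case C_pair0
  from ty[unfolded C_pair0(1)] show ?thesis
  proof cases
    case (T_LamE \<Gamma>1 \<tau> \<Gamma>2)
    then show ?thesis by (auto dest!: pair_inv)
  next
    case (T_ProdE0 \<tau>)
    then show ?thesis by (auto dest!: pair_inv)
  qed
next
  case C_if1
  from ty[unfolded C_if1(1)] show ?thesis
  proof cases
    case (T_LamE \<Gamma>1 \<tau> \<Gamma>2)
    then show ?thesis by (auto dest!: const_inv)
  next
    case (T_BoolE \<Gamma>1 \<Gamma>2)
    have "typing (\<Gamma>2 \<union> \<Gamma>1) u' T" using weaken[OF T_BoolE(3) typing_finite[OF T_BoolE(2)]] .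
    then show ?thesis using T_BoolE(1) by (simp add: Un_commute)
  qed
next
  case C_if0
  from ty[unfolded C_if0(1)] show ?thesis
  proof cases
    case (T_LamE \<Gamma>1 \<tau> \<Gamma>2)
    then show ?thesis by (auto dest!: const_inv)
  next
    case (T_BoolE \<Gamma>1 \<Gamma>2)
    have "typing (\<Gamma>2 \<union> \<Gamma>1) u' T" using weaken[OF T_BoolE(4) typing_finite[OF T_BoolE(2)]] .
    then show ?thesis using T_BoolE(1) by (simp add: Un_commute)
  qed
next
  case (C_tens \<tau> \<rho> t s r)
  from ty[unfolded C_tens(1)] show ?thesis
  proof cases
    case (T_LamE \<Gamma>1 \<tau>' \<Gamma>2)
    then show ?thesis using app_const2[OF T_LamE(2) ctype.simps(5)] by simp
  next
    case (T_TensE \<Gamma>1 x y \<Gamma>2)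
    note E1 = T_TensE(1) and E2 = T_TensE(2) and E3 = T_TensE(3) and E4 = T_TensE(4)
      and E5 = T_TensE(5) and E6 = T_TensE(6) and E7 = T_TensE(7) and E8 = T_TensE(8)
      and E9 = T_TensE(9)
    from app_const2[OF E2 ctype.simps(5)] obtain \<Gamma>c \<Gamma>d \<Gamma>e where
      g: "\<Gamma>1 = (\<Gamma>c \<union> \<Gamma>d) \<union> \<Gamma>e" "\<Gamma>c \<inter> \<Gamma>d = {}" "(\<Gamma>c \<union> \<Gamma>d) \<inter> \<Gamma>e = {}"
        "finite \<Gamma>c" "typing \<Gamma>d t \<tau>" "typing \<Gamma>e s \<rho>" by auto
    define B where "B = \<Gamma>2 \<union> fv r \<union> {(x,\<tau>),(y,\<rho>)} \<union> \<Gamma>1"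
    have finB: "finite B" unfolding B_def using typing_finite[OF E8] typing_finite[OF E2] by simp
    obtain x' where x': "(x', \<tau>) \<notin> B" using fresh[OF finB, of \<tau>] by (elim exE)
    have finB': "finite (insert (x', \<tau>) B)" using finB by simp
    obtain y' where y': "(y', \<rho>) \<notin> insert (x', \<tau>) B" using fresh[OF finB', of \<rho>] by (elim exE)
    have x'B: "(x',\<tau>) \<notin> \<Gamma>2 \<union> fv r \<union> {(x,\<tau>),(y,\<rho>)}" using x' unfolding B_def by simp
    have y'B: "(y',\<rho>) \<notin> \<Gamma>2 \<union> fv r \<union> {(x,\<tau>),(y,\<rho>)}" using y' unfolding B_def by simp
    have xy: "(x',\<tau>) \<noteq> (y',\<rho>)" using y' by auto
    have body: "typing (\<Gamma>2 \<union> {(x',\<tau>),(y',\<rho>)}) (opn2 0 (FVar x' \<tau>) (FVar y' \<rho>) r) T"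
      by (rule tens_body[OF E8 E3 E4 E5 E6 E7 x'B y'B xy])
    have fvt: "fv t \<subseteq> \<Gamma>1" using typing_fv[OF g(5)] g(1) by auto
    have fvs: "fv s \<subseteq> \<Gamma>1" using typing_fv[OF g(6)] g(1) by auto
    have G1: "\<Gamma>1 \<inter> \<Gamma>2 = {}" by (fact E9)
    have i1: "typing (insert (x',\<tau>) (\<Gamma>2 \<union> {(y',\<rho>)})) (opn2 0 (FVar x' \<tau>) (FVar y' \<rho>) r) T"
      using body by (simp add: insert_commute)
    have n1: "(x',\<tau>) \<notin> \<Gamma>2 \<union> {(y',\<rho>)}" using x'B xy by auto
    have d1: "(\<Gamma>2 \<union> {(y',\<rho>)}) \<inter> \<Gamma>d = {}" using G1 g(1) y' unfolding B_def by auto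
    have s1: "typing \<Gamma>d t (snd (x',\<tau>))" using g(5) by simp
    from subst_typing[OF i1 n1 d1 s1]
    have r1: "typing ((\<Gamma>2 \<union> {(y',\<rho>)}) \<union> \<Gamma>d) (subst (x',\<tau>) t (opn2 0 (FVar x' \<tau>) (FVar y' \<rho>) r)) T" .
    have e1: "subst (x',\<tau>) t (opn2 0 (FVar x' \<tau>) (FVar y' \<rho>) r) = opn2 0 t (FVar y' \<rho>) r"
      using typing_lcl[OF g(5)] x'B xy by (auto simp: subst_opn2 subst_id)
    have i2: "typing (insert (y',\<rho>) (\<Gamma>2 \<union> \<Gamma>d)) (opn2 0 t (FVar y' \<rho>) r) T"
    proof -
      have "insert (y',\<rho>) (\<Gamma>2 \<union> \<Gamma>d) = (\<Gamma>2 \<union> {(y',\<rho>)}) \<union> \<Gamma>d" by auto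
      then show ?thesis using r1 e1 by simp
    qed
    have n2: "(y',\<rho>) \<notin> \<Gamma>2 \<union> \<Gamma>d" using y' g(1) unfolding B_def by auto
    have d2: "(\<Gamma>2 \<union> \<Gamma>d) \<inter> \<Gamma>e = {}" using G1 g(1,3) by auto
    have s2: "typing \<Gamma>e s (snd (y',\<rho>))" using g(6) by simp
    from subst_typing[OF i2 n2 d2 s2]
    have r2: "typing ((\<Gamma>2 \<union> \<Gamma>d) \<union> \<Gamma>e) (subst (y',\<rho>) s (opn2 0 t (FVar y' \<rho>) r)) T" .
    have yt: "(y',\<rho>) \<notin> fv t" using fvt y' unfolding B_def by auto
    have e2: "subst (y',\<rho>) s (opn2 0 t (FVar y' \<rho>) r) = opn2 0 t s r"
      using typing_lcl[OF g(6)] y'B yt by (simp add: subst_opn2 subst_id)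
    have "typing (((\<Gamma>2 \<union> \<Gamma>d) \<union> \<Gamma>e) \<union> \<Gamma>c) (opn2 0 t s r) T"
      using weaken[OF r2 g(4)] e2 by simp
    moreover have "((\<Gamma>2 \<union> \<Gamma>d) \<union> \<Gamma>e) \<union> \<Gamma>c = \<Gamma>" using E1 g(1) by auto
    ultimately show ?thesis using C_tens(2) by simp
  qed
next
  case (C_nil \<tau> t)
  have arr: "\<exists>a b. T' = TArr a b" if "typing \<Gamma>' (App (Const (CNil \<tau>)) (Brace t)) T'" for \<Gamma>' T'
    using nil_inv[OF that] by auto
  have "\<exists>\<Gamma>1 \<Gamma>2 a. \<Gamma> = \<Gamma>1 \<union> \<Gamma>2 \<and> \<Gamma>1 \<inter> \<Gamma>2 = {} \<and> typing \<Gamma>1 (App (Const (CNil \<tau>)) (Brace t)) (TArr a T) \<and> typing \<Gamma>2 u' a"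
    by (rule app_inv_arr[OF ty[unfolded C_nil(1)]]) (erule arr)
  then obtain \<Gamma>1 \<Gamma>2 a where
    h: "\<Gamma> = \<Gamma>1 \<union> \<Gamma>2" "\<Gamma>1 \<inter> \<Gamma>2 = {}" "typing \<Gamma>1 (App (Const (CNil \<tau>)) (Brace t)) (TArr a T)" "typing \<Gamma>2 u' a"
    by auto
  have "a = T" using nil_inv[OF h(3)] by auto
  then have "typing (\<Gamma>2 \<union> \<Gamma>1) u' T" using weaken[OF h(4) typing_finite[OF h(3)]] by simp
  then show ?thesis using h(1) by (simp add: Un_commute)
next
  case (C_cons \<tau> l d a t s)
  let ?H = "App (App (App (Const (CCons \<tau>)) d) a) l"
  have Hty: "T' = TList \<tau>" if "typing \<Gamma>' ?H T'" for \<Gamma>' T'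
    using app_const3[OF that ctype.simps(4)] by simp
  have arr: "\<exists>a b. T' = TArr a b" if "typing \<Gamma>' (App ?H (Brace t)) T'" for \<Gamma>' T'
  proof -
    have "\<exists>\<rho>. T' = TArr \<rho> \<rho> \<and> typing \<Gamma>' ?H (TList \<tau>) \<and> typing {} t (TArr TDia (TArr \<tau> (TArr \<rho> \<rho>)))"
      by (rule brace_inv[OF that]) (erule Hty)
    then show ?thesis by auto
  qed
  have "\<exists>\<Gamma>1 \<Gamma>2 a0. \<Gamma> = \<Gamma>1 \<union> \<Gamma>2 \<and> \<Gamma>1 \<inter> \<Gamma>2 = {} \<and> typing \<Gamma>1 (App ?H (Brace t)) (TArr a0 T) \<and> typing \<Gamma>2 s a0"
    by (rule app_inv_arr[OF ty[unfolded C_cons(1)]]) (erule arr)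
  then obtain \<Gamma>1 \<Gamma>2 a0 where
    h: "\<Gamma> = \<Gamma>1 \<union> \<Gamma>2" "\<Gamma>1 \<inter> \<Gamma>2 = {}" "typing \<Gamma>1 (App ?H (Brace t)) (TArr a0 T)" "typing \<Gamma>2 s a0"
    by auto
  have "\<exists>\<rho>. TArr a0 T = TArr \<rho> \<rho> \<and> typing \<Gamma>1 ?H (TList \<tau>) \<and> typing {} t (TArr TDia (TArr \<tau> (TArr \<rho> \<rho>)))"
    by (rule brace_inv[OF h(3)]) (erule Hty)
  then obtain \<rho> where
    b: "TArr a0 T = TArr \<rho> \<rho>" "typing \<Gamma>1 ?H (TList \<tau>)" "typing {} t (TArr TDia (TArr \<tau> (TArr \<rho> \<rho>)))"
    by auto
  from app_const3[OF b(2) ctype.simps(4)] obtain \<Gamma>c \<Gamma>d \<Gamma>a \<Gamma>l where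
    g: "\<Gamma>1 = ((\<Gamma>c \<union> \<Gamma>d) \<union> \<Gamma>a) \<union> \<Gamma>l" "\<Gamma>c \<inter> \<Gamma>d = {}" "(\<Gamma>c \<union> \<Gamma>d) \<inter> \<Gamma>a = {}"
      "((\<Gamma>c \<union> \<Gamma>d) \<union> \<Gamma>a) \<inter> \<Gamma>l = {}" "finite \<Gamma>c" "typing \<Gamma>d d TDia" "typing \<Gamma>a a \<tau>"
      "typing \<Gamma>l l (TList \<tau>)" by auto
  have k1: "typing ({} \<union> \<Gamma>d) (App t d) (TArr \<tau> (TArr \<rho> \<rho>))"
    by (rule typing.T_LamE[OF b(3) g(6)]) simp
  have k2: "typing (({} \<union> \<Gamma>d) \<union> \<Gamma>a) (App (App t d) a) (TArr \<rho> \<rho>)"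
    by (rule typing.T_LamE[OF k1 g(7)]) (use g(3) in auto)
  have k3: "typing \<Gamma>l (App l (Brace t)) (TArr \<rho> \<rho>)"
    by (rule typing.T_ListE[OF g(8) b(3)])
  have s0: "typing \<Gamma>2 s \<rho>" using h(4) b(1) by simp
  have k4: "typing (\<Gamma>l \<union> \<Gamma>2) (App (App l (Brace t)) s) \<rho>"
    by (rule typing.T_LamE[OF k3 s0]) (use h(2) g(1) in auto)
  have k5: "typing ((({} \<union> \<Gamma>d) \<union> \<Gamma>a) \<union> (\<Gamma>l \<union> \<Gamma>2)) (App (App (App t d) a) (App (App l (Brace t)) s)) \<rho>"
    by (rule typing.T_LamE[OF k2 k4]) (use h(2) g(1,4) in auto)
  have "typing (((({} \<union> \<Gamma>d) \<union> \<Gamma>a) \<union> (\<Gamma>l \<union> \<Gamma>2)) \<union> \<Gamma>c) (App (App (App t d) a) (App (App l (Brace t)) s)) \<rho>"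
    using weaken[OF k5 g(5)] .
  moreover have "((({} \<union> \<Gamma>d) \<union> \<Gamma>a) \<union> (\<Gamma>l \<union> \<Gamma>2)) \<union> \<Gamma>c = \<Gamma>" using h(1) g(1) by auto
  moreover have "T = \<rho>" using b(1) by simp
  ultimately show ?thesis using C_cons(2) by simp
qed

lemma no_red: "\<not> red (Const c) x" "\<not> red (Pair a b) x" "\<not> red (Lam \<sigma> a) x" "\<not> red (Brace a) x"
  using red_app by blast+

theorem lemma3p5:
  assumes "typing \<Gamma> t \<tau>" and "red t t'"
  shows "typing \<Gamma> t' \<tau>"
  using assms(2,1)
proof (induction arbitrary: \<Gamma> \<tau> rule: red.induct)
  case (R_conv t t')
  then show ?case using conv_pres by blast
next
  case (R_appL t t' s)
  from R_appL.prems show ?case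
  proof cases
    case (T_LamE \<Gamma>1 \<sigma> \<Gamma>2)
    then show ?thesis using R_appL.IH typing.T_LamE by metis
  next
    case (T_ProdE1 \<rho>)
    then show ?thesis using R_appL.IH typing.T_ProdE1 by metis
  next
    case (T_ProdE0 \<sigma>)
    then show ?thesis using R_appL.IH typing.T_ProdE0 by metis
  next
    case (T_BoolE \<Gamma>1 \<Gamma>2 s1 r1)
    then show ?thesis using R_appL.IH typing.T_BoolE by metis
  next
    case (T_TensE \<Gamma>1 \<sigma> \<rho> x s0 y \<Gamma>2)
    have "typing \<Gamma>1 t' (TTens \<sigma> \<rho>)" using R_appL.IH T_TensE(3) by blast
    from typing.T_TensE[OF this T_TensE(4-10)] show ?thesis using T_TensE(1,2) by simp
  next
    case (T_ListE \<sigma> s0 \<rho>)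
    then show ?thesis using R_appL.IH typing.T_ListE by metis
  qed
next
  case (R_appR s s' t)
  from R_appR.prems show ?case
  proof cases
    case (T_LamE \<Gamma>1 \<sigma> \<Gamma>2)
    then show ?thesis using R_appR.IH typing.T_LamE by metis
  next
    case (T_ProdE1 \<rho>)
    then show ?thesis using R_appR.hyps no_red by simp
  next
    case (T_ProdE0 \<sigma>)
    then show ?thesis using R_appR.hyps no_red by simp
  next
    case (T_BoolE \<Gamma>1 \<Gamma>2 s1 r1)
    then show ?thesis using R_appR.hyps no_red by simp
  next
    case (T_TensE \<Gamma>1 \<sigma> \<rho> x s0 y \<Gamma>2)
    then show ?thesis using R_appR.hyps no_red by simp
  next
    case (T_ListE \<sigma> s0 \<rho>)
    then show ?thesis using R_appR.hyps no_red by simp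
  qed
qed

end
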